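(* For all integers $n\ge0$ and $p\ge1$, $$\mathcal{B}_{n,p}=p\int_0^1(1-t)^{p-1}\phi_n(t)\,dt.$$
   Context: $S(n,k)$ denotes the Stirling numbers of the second kind and $\phi_n(t)=\sum_{k=0}^nS(n,k)t^k$ the Bell (exponential) polynomials. For an integer $p\ge0$, the $p$-Bell numbers $\mathcal{B}_{n,p}$ are defined by $\sum_{n\ge0}\mathcal{B}_{n,p}\frac{z^n}{n!}=\sum_{n\ge0}\binom{n+p}{p}^{-1}\frac{(e^z-1)^n}{n!}$. *)

theory Defs
  imports "HOL-Analysis.Analysis" "HOL-Combinatorics.Stirling"
    "HOL-Computational_Algebra.Formal_Power_Series"
begin

definition bell_poly :: "nat \<Rightarrow> real \<Rightarrow> real" where
  "bell_poly n t = (\<Sum>k\<le>n. real (Stirling n k) * t ^ k)"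

text \<open>Exponential generating function of the p-Bell numbers, as the formal power series
  sum over k of binom(k+p,p)^(-1) (e^z - 1)^k / k!.  Since (e^z - 1)^k has order k,
  only the terms k <= n contribute to the n-th coefficient, so this is the formal sum.\<close>
definition pBell_egf :: "nat \<Rightarrow> real fps" where
  "pBell_egf p = Abs_fps (\<lambda>n. \<Sum>k\<le>n.
      fps_nth ((fps_exp 1 - 1) ^ k / fps_const (fact k)) n / real ((k + p) choose p))"

definition pBell :: "nat \<Rightarrow> nat \<Rightarrow> real" where
  "pBell n p = fact n * fps_nth (pBell_egf p) n"

end

theory Submission
  imports Defs
begin

lemma aux_fact_eq:
  assumes "of_nat (Suc m) * (x::real) = of_nat (Suc j) * (y + z)"
  shows "x * fact (Suc m) = of_nat (Suc j) * (y * fact m + z * fact m)"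
proof -
  have "x * fact (Suc m) = (of_nat (Suc m) * x) * fact m" by (simp add: algebra_simps)
  also have "\<dots> = of_nat (Suc j) * (y + z) * fact m" by (simp only: assms)
  finally show ?thesis by (simp add: algebra_simps)
qed

lemma coeff_expm1_pow:
  "fps_nth ((fps_exp (1::real) - 1) ^ k) n * fact n = fact k * real (Stirling n k)"
proof (induction n arbitrary: k)
  case 0
  then show ?case by (cases k) (simp_all add: fps_nth_power_0)
next
  case (Suc m)
  show ?case
  proof (cases k)
    case 0
    then show ?thesis by simp
  next
    case (Suc j)
    let ?F = "fps_exp (1::real) - 1"
    have d: "fps_deriv (?F ^ Suc j) = of_nat (Suc j) * (?F ^ Suc j + ?F ^ j)"
    proof -
      have "fps_deriv (?F ^ Suc j) = of_nat (Suc j) * fps_deriv ?F * ?F ^ j"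
        by (subst fps_deriv_power') simp
      also have "fps_deriv ?F = ?F + 1" by simp
      finally show ?thesis by (simp only: power_Suc distrib_left distrib_right mult_1_left mult_1_right mult.assoc)
    qed
    have "fps_nth (fps_deriv (?F ^ Suc j)) m = of_nat (Suc m) * fps_nth (?F ^ Suc j) (Suc m)"
      by (simp only: fps_deriv_nth Suc_eq_plus1)
    moreover have "fps_nth (fps_deriv (?F ^ Suc j)) m = of_nat (Suc j) * (fps_nth (?F ^ Suc j) m + fps_nth (?F ^ j) m)"
      unfolding d by (simp add: fps_of_nat[symmetric])
    ultimately have e: "fps_nth (?F ^ Suc j) (Suc m) * fact (Suc m) = of_nat (Suc j) * (fps_nth (?F ^ Suc j) m * fact m + fps_nth (?F ^ j) m * fact m)"
      by (intro aux_fact_eq) simp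
    show ?thesis unfolding \<open>k = Suc j\<close> e Suc.IH
      by (simp del: power_Suc add: algebra_simps)
  qed
qed


lemma pBell_sum:
  "pBell n p = (\<Sum>k\<le>n. real (Stirling n k) / real ((k + p) choose p))"
proof -
  have "pBell n p = (\<Sum>k\<le>n. fact n * (inverse (fact k) * fps_nth ((fps_exp (1::real) - 1) ^ k) n) / real ((k + p) choose p))"
    unfolding pBell_def pBell_egf_def by (simp add: sum_distrib_left)
  also have "\<dots> = (\<Sum>k\<le>n. real (Stirling n k) / real ((k + p) choose p))"
  proof (rule sum.cong[OF refl])
    fix k
    have "fact n * (inverse (fact k) * fps_nth ((fps_exp (1::real) - 1) ^ k) n)
        = inverse (fact k) * (fps_nth ((fps_exp (1::real) - 1) ^ k) n * fact n)" by simp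
    also have "\<dots> = real (Stirling n k)" unfolding coeff_expm1_pow by simp
    finally show "fact n * (inverse (fact k) * fps_nth ((fps_exp (1::real) - 1) ^ k) n) / real ((k + p) choose p)
        = real (Stirling n k) / real ((k + p) choose p)" by simp
  qed
  finally show ?thesis .
qed

lemma beta_int:
  assumes "p \<ge> 1"
  shows "((\<lambda>t::real. (1 - t) ^ (p - 1) * t ^ k) has_integral (fact k * fact (p - 1) / fact (k + p))) {0..1}"
proof -
  have B: "((\<lambda>t. t powr (real (Suc k) - 1) * (1 - t) powr (real p - 1)) has_integral Beta (real (Suc k)) (real p)) {0..1}"
    using assms by (intro has_integral_Beta_real) auto
  have "Beta (real (Suc k)) (real p) = fact k * fact (p - 1) / fact (k + p)"
  proof -
    have g1: "Gamma (real (Suc k)) = fact k" using Gamma_fact[of k] by (simp add: add.commute)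
    have g2: "Gamma (real p) = fact (p - 1)" using Gamma_fact[of "p - 1", where 'a=real] assms
      by (simp add: of_nat_diff add.commute)
    have g3: "Gamma (real (Suc k) + real p) = fact (k + p)" using Gamma_fact[of "k + p", where 'a=real]
      by (simp add: algebra_simps)
    show ?thesis unfolding Beta_def g1 g2 g3 ..
  qed
  with B have B': "((\<lambda>t. t powr (real (Suc k) - 1) * (1 - t) powr (real p - 1)) has_integral (fact k * fact (p - 1) / fact (k + p))) {0<..<1}"
    by (simp add: has_integral_Icc_iff_Ioo)
  have "((\<lambda>t::real. (1 - t) ^ (p - 1) * t ^ k) has_integral (fact k * fact (p - 1) / fact (k + p))) {0<..<1}"
  proof (subst has_integral_cong)
    fix t :: real assume "t \<in> {0<..<1}"
    then have "t > 0" "1 - t > 0" by auto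
    then show "(1 - t) ^ (p - 1) * t ^ k = t powr (real (Suc k) - 1) * (1 - t) powr (real p - 1)"
      using assms by (simp add: powr_realpow[symmetric] of_nat_diff)
  qed (rule B')
  then show ?thesis by (simp add: has_integral_Icc_iff_Ioo)
qed

theorem mainTheorem19:
  fixes n p :: nat
  assumes "p \<ge> 1"
  shows "pBell n p = real p * integral {0..1} (\<lambda>t::real. (1 - t) ^ (p - 1) * bell_poly n t)"
proof -
  have I: "((\<lambda>t::real. (1 - t) ^ (p - 1) * bell_poly n t) has_integral
      (\<Sum>k\<le>n. real (Stirling n k) * (fact k * fact (p - 1) / fact (k + p)))) {0..1}"
  proof -
    have "((\<lambda>t::real. \<Sum>k\<le>n. real (Stirling n k) * ((1 - t) ^ (p - 1) * t ^ k)) has_integral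
      (\<Sum>k\<le>n. real (Stirling n k) * (fact k * fact (p - 1) / fact (k + p)))) {0..1}"
      by (intro has_integral_sum has_integral_mult_right beta_int assms) auto
    moreover have "(\<lambda>t::real. \<Sum>k\<le>n. real (Stirling n k) * ((1 - t) ^ (p - 1) * t ^ k))
        = (\<lambda>t::real. (1 - t) ^ (p - 1) * bell_poly n t)"
      by (auto simp: bell_poly_def sum_distrib_left algebra_simps)
    ultimately show ?thesis by simp
  qed
  have "real p * integral {0..1} (\<lambda>t::real. (1 - t) ^ (p - 1) * bell_poly n t)
      = (\<Sum>k\<le>n. real (Stirling n k) * (real p * fact k * fact (p - 1) / fact (k + p)))"
    unfolding integral_unique[OF I] by (simp add: sum_distrib_left algebra_simps)
  also have "\<dots> = (\<Sum>k\<le>n. real (Stirling n k) / real ((k + p) choose p))"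
  proof (rule sum.cong[OF refl])
    fix k
    have fp: "fact p = real p * (fact (p - 1) :: real)" using assms
      by (metis Suc_diff_1 fact_Suc le_numeral_extra(2) less_le_trans of_nat_Suc zero_less_one_class.zero_le_one le_less_trans order.strict_iff_not)
    have "real ((k + p) choose p) = fact (k + p) / (fact p * fact k)"
      by (simp add: binomial_fact)
    then show "real (Stirling n k) * (real p * fact k * fact (p - 1) / fact (k + p))
        = real (Stirling n k) / real ((k + p) choose p)"
      by (simp add: fp field_simps)
  qed
  finally show ?thesis by (simp add: pBell_sum)
qed

end
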